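(* Let $\mathcal{C} \subseteq \mathbb{R}^n$ be a polyhedron with nonempty interior, and let $Z$ be a random vector in $\mathbb{R}^n$ with $\mathbb{E}Z = 0$ and $\mathbb{E}\|Z\|^2 < \infty$. Let $\theta_0 \in \mathcal{C}$ and suppose $\mathbb{P}(Z \in \mathrm{int}\, T_{\mathcal{C}}(\theta_0)) > 0$. Then $$\sup_{\theta^* \notin \mathcal{C} :\ \Pi_{\mathcal{C}}(\theta^* ) = \theta_0} \delta\big(T_{\mathcal{C}}(\Pi_{\mathcal{C}}(\theta^* )) \cap (\theta^* - \Pi_{\mathcal{C}}(\theta^* ))^\perp\big) < \delta(T_{\mathcal{C}}(\theta_0)).$$
   Context: A polyhedron is a set $\{x : Ax \le b\}$. $\Pi_{\mathcal{C}}$ is Euclidean projection onto $\mathcal{C}$; $v^\perp = \{u:\langle u,v\rangle=0\}$; $T_{\mathcal{C}}(\theta_0) = \mathrm{cl}\{\alpha(\theta-\theta_0): \alpha\ge0, \theta\in\mathcal{C}\}$ is the tangent cone. For a closed convex cone $T$, $\delta(T) = \mathbb{E}\|\Pi_T(Z)\|^2$ (generalized statistical dimension with respect to the distribution of $Z$). *)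

theory Defs
  imports "HOL-Analysis.Analysis" "HOL-Probability.Probability"
begin

text \<open>Euclidean projection onto C is the library's closest_point C.
  Tangent cone of C at theta0: closure of the cone generated by C - theta0.\<close>
definition tangent_cone :: "'a::euclidean_space set \<Rightarrow> 'a \<Rightarrow> 'a set" where
  "tangent_cone C x0 = closure {\<alpha> *\<^sub>R (x - x0) | \<alpha> x. \<alpha> \<ge> 0 \<and> x \<in> C}"

definition perp :: "'a::real_inner \<Rightarrow> 'a set" where
  "perp v = {u. inner u v = 0}"

definition stat_dim :: "'w measure \<Rightarrow> ('w \<Rightarrow> 'a::euclidean_space) \<Rightarrow> 'a set \<Rightarrow> real" where
  "stat_dim M Z T = (\<integral>\<omega>. (norm (closest_point T (Z \<omega>)))\<^sup>2 \<partial>M)"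

end

theory Submission
  imports Defs
begin

lemma cone_proj:
  fixes K :: "'a::euclidean_space set"
  assumes "convex K" "closed K" "0 \<in> K" "\<And>x t. x \<in> K \<Longrightarrow> t \<ge> 0 \<Longrightarrow> t *\<^sub>R x \<in> K"
  shows "inner (z - closest_point K z) (closest_point K z) = 0"
    and "\<And>y. y \<in> K \<Longrightarrow> inner (z - closest_point K z) y \<le> 0"
proof -
  let ?p = "closest_point K z"
  have pK: "?p \<in> K" using assms closest_point_in_set by blast
  have 1: "inner (z - ?p) (0 - ?p) \<le> 0" using closest_point_dot[OF assms(1,2,3)] .
  have "inner (z - ?p) (2 *\<^sub>R ?p - ?p) \<le> 0"
    using closest_point_dot[OF assms(1,2) assms(4)[OF pK, of 2]] by simp
  then have 2: "inner (z - ?p) ?p \<le> 0" by (simp add: algebra_simps)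
  from 1 2 show e: "inner (z - ?p) ?p = 0" by (simp add: inner_diff_right)
  fix y assume "y \<in> K"
  then have "inner (z - ?p) (y - ?p) \<le> 0" using closest_point_dot[OF assms(1,2)] by blast
  with e show "inner (z - ?p) y \<le> 0" by (simp add: inner_diff_right)
qed

lemma sq_norm_add: "(norm (a + b))\<^sup>2 = (norm a)\<^sup>2 + (norm b)\<^sup>2 + 2 * inner a (b::'a::real_inner)"
  by (simp add: power2_norm_eq_inner inner_add_left inner_add_right inner_commute[of b a])

lemma cone_proj_norm:
  fixes K :: "'a::euclidean_space set"
  assumes "convex K" "closed K" "0 \<in> K" "\<And>x t. x \<in> K \<Longrightarrow> t \<ge> 0 \<Longrightarrow> t *\<^sub>R x \<in> K"
  shows "(norm z)\<^sup>2 = (norm (closest_point K z))\<^sup>2 + (norm (z - closest_point K z))\<^sup>2"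
proof -
  let ?p = "closest_point K z"
  have e: "inner (z - ?p) ?p = 0" using cone_proj[OF assms] by blast
  have "z = (z - ?p) + ?p" by simp
  then have "(norm z)\<^sup>2 = (norm ((z - ?p) + ?p))\<^sup>2" by simp
  also have "\<dots> = (norm (z - ?p))\<^sup>2 + (norm ?p)\<^sup>2 + 2 * inner (z - ?p) ?p"
    using sq_norm_add[of "z - ?p" ?p] by simp
  finally show ?thesis using e by simp
qed

lemma cone_proj_mono:
  fixes K T :: "'a::euclidean_space set"
  assumes "convex K" "closed K" "0 \<in> K" "\<And>x t. x \<in> K \<Longrightarrow> t \<ge> 0 \<Longrightarrow> t *\<^sub>R x \<in> K"
  assumes "convex T" "closed T" "0 \<in> T" "\<And>x t. x \<in> T \<Longrightarrow> t \<ge> 0 \<Longrightarrow> t *\<^sub>R x \<in> T"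
  assumes "K \<subseteq> T"
  shows "norm (closest_point K z) \<le> norm (closest_point T z)"
proof -
  let ?p = "closest_point K z" and ?q = "closest_point T z"
  have pK: "?p \<in> K" using assms closest_point_in_set by blast
  have e: "inner (z - ?p) ?p = 0" using cone_proj[OF assms(1-4)] by blast
  have "inner (z - ?q) ?p \<le> 0" using cone_proj(2)[OF assms(5-8)] pK assms(9) by blast
  have "(norm ?p)\<^sup>2 = inner z ?p" using e by (simp add: power2_norm_eq_inner inner_diff_left)
  also have "\<dots> = inner ?q ?p + inner (z - ?q) ?p" by (simp add: inner_diff_left)
  also have "\<dots> \<le> norm ?q * norm ?p" using \<open>inner (z - ?q) ?p \<le> 0\<close> Cauchy_Schwarz_ineq2[of ?q ?p] by linarith
  finally have "norm ?p * norm ?p \<le> norm ?q * norm ?p" by (simp add: power2_eq_square)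
  then show ?thesis
    by (metis mult_right_le_imp_le norm_ge_zero order_le_less)
qed

lemma hs_mem: "H = {x. \<alpha> \<bullet> x \<le> \<beta>} \<Longrightarrow> x \<in> H \<longleftrightarrow> \<alpha> \<bullet> x \<le> \<beta>"
  by simp

lemma tangent_cone_polyhedron:
  fixes C :: "'a::euclidean_space set"
  assumes F: "finite F" "C = \<Inter>F" "\<And>h. h \<in> F \<Longrightarrow> h = {x. a h \<bullet> x \<le> b h}" and t0: "\<theta>0 \<in> C"
  shows "tangent_cone C \<theta>0 = (\<Inter>h\<in>{h\<in>F. a h \<bullet> \<theta>0 = b h}. {d. a h \<bullet> d \<le> 0})"
    (is "_ = ?T")
proof -
  have mem: "x \<in> h \<longleftrightarrow> a h \<bullet> x \<le> b h" if "h \<in> F" for h x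
    by (rule hs_mem[OF F(3)[OF that]])
  have le: "a h \<bullet> x \<le> b h" if "h \<in> F" "x \<in> C" for h x
  proof -
    have "x \<in> h" using that F(2) by blast
    then show ?thesis using mem[OF that(1)] by blast
  qed
  show ?thesis
proof
  let ?S = "{\<alpha> *\<^sub>R (x - \<theta>0) | \<alpha> x. \<alpha> \<ge> 0 \<and> x \<in> C}"
  have "closed ?T" by (intro closed_INT) (auto intro: closed_halfspace_le)
  moreover have "?S \<subseteq> ?T"
  proof clarify
    fix \<alpha> :: real and x h assume "\<alpha> \<ge> 0" "x \<in> C" "h \<in> F" "a h \<bullet> \<theta>0 = b h"
    then have "a h \<bullet> (x - \<theta>0) \<le> 0" using le[of h x] by (simp add: inner_diff_right)
    then show "a h \<bullet> (\<alpha> *\<^sub>R (x - \<theta>0)) \<le> 0"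
      using \<open>\<alpha> \<ge> 0\<close> by (simp add: mult_nonneg_nonpos)
  qed
  ultimately show "tangent_cone C \<theta>0 \<subseteq> ?T"
    unfolding tangent_cone_def by (rule closure_minimal[rotated])
next
  let ?S = "{\<alpha> *\<^sub>R (x - \<theta>0) | \<alpha> x. \<alpha> \<ge> 0 \<and> x \<in> C}"
  show "?T \<subseteq> tangent_cone C \<theta>0"
  proof
    fix d assume d: "d \<in> ?T"
    have ev: "\<forall>\<^sub>F t in at_right (0::real). \<forall>h\<in>F - {h\<in>F. a h \<bullet> \<theta>0 = b h}. t * (a h \<bullet> d) < b h - a h \<bullet> \<theta>0"
    proof (rule eventually_ball_finite)
      show "finite (F - {h\<in>F. a h \<bullet> \<theta>0 = b h})" using F(1) by simp
      show "\<forall>h\<in>F - {h\<in>F. a h \<bullet> \<theta>0 = b h}. \<forall>\<^sub>F t in at_right 0. t * (a h \<bullet> d) < b h - a h \<bullet> \<theta>0"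
      proof
        fix h assume h: "h \<in> F - {h\<in>F. a h \<bullet> \<theta>0 = b h}"
        then have hF: "h \<in> F" and hne: "a h \<bullet> \<theta>0 \<noteq> b h" by auto
        have "a h \<bullet> \<theta>0 \<le> b h" using le[OF hF t0] .
        then have "a h \<bullet> \<theta>0 < b h" using hne by linarith
        moreover have "((\<lambda>t. t * (a h \<bullet> d)) \<longlongrightarrow> 0 * (a h \<bullet> d)) (at_right (0::real))"
          by (intro tendsto_intros)
        ultimately show "\<forall>\<^sub>F t in at_right 0. t * (a h \<bullet> d) < b h - a h \<bullet> \<theta>0"
          by (intro order_tendstoD) auto
      qed
    qed
    have "\<forall>\<^sub>F t in at_right (0::real). t > 0" by (simp add: eventually_at_right_less)
    with ev have "\<forall>\<^sub>F t in at_right (0::real). t > 0 \<and> (\<forall>h\<in>F - {h\<in>F. a h \<bullet> \<theta>0 = b h}. t * (a h \<bullet> d) < b h - a h \<bullet> \<theta>0)"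
      by (rule eventually_conj[rotated])
    then have "\<exists>t. t > 0 \<and> (\<forall>h\<in>F - {h\<in>F. a h \<bullet> \<theta>0 = b h}. t * (a h \<bullet> d) < b h - a h \<bullet> \<theta>0)"
      by (rule eventually_happens'[OF trivial_limit_at_right_real])
    then obtain t where t: "t > 0" "\<forall>h\<in>F - {h\<in>F. a h \<bullet> \<theta>0 = b h}. t * (a h \<bullet> d) < b h - a h \<bullet> \<theta>0"
      by blast
    have "\<theta>0 + t *\<^sub>R d \<in> C"
    proof -
      have "\<theta>0 + t *\<^sub>R d \<in> h" if h: "h \<in> F" for h
      proof (cases "a h \<bullet> \<theta>0 = b h")
        case True
        then have "a h \<bullet> d \<le> 0" using d h by blast
        then have "t * (a h \<bullet> d) \<le> 0" using t by (simp add: mult_nonneg_nonpos)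
        then have "a h \<bullet> (\<theta>0 + t *\<^sub>R d) \<le> b h" using True by (simp add: inner_add_right)
        then show ?thesis using mem[OF h] by blast
      next
        case False
        then have "a h \<bullet> (\<theta>0 + t *\<^sub>R d) \<le> b h" proof -
          have "t * (a h \<bullet> d) < b h - a h \<bullet> \<theta>0" using t(2) h False by blast
          then show ?thesis by (simp add: inner_add_right)
        qed
        then show ?thesis using mem[OF h] by blast
      qed
      then show ?thesis using F(2) by blast
    qed
    then have inC: "\<theta>0 + t *\<^sub>R d \<in> C" .
    have "d \<in> ?S"
    proof (intro CollectI exI conjI)
      show "d = (1/t) *\<^sub>R ((\<theta>0 + t *\<^sub>R d) - \<theta>0)" using t(1) by simp
      show "1/t \<ge> 0" using t(1) by simp
      show "\<theta>0 + t *\<^sub>R d \<in> C" by (rule inC)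
    qed
    then show "d \<in> tangent_cone C \<theta>0" unfolding tangent_cone_def
      using closure_subset[of ?S] by (rule subsetD[rotated])
  qed
qed
qed

lemma not_in_face:
  fixes T :: "'a::euclidean_space set"
  assumes "v \<noteq> 0" "\<And>d. d \<in> T \<Longrightarrow> v \<bullet> d \<le> 0" "z \<in> interior T"
  shows "v \<bullet> z \<noteq> 0"
proof
  assume vz: "v \<bullet> z = 0"
  obtain e where e: "e > 0" "ball z e \<subseteq> T" using assms(3) mem_interior by blast
  define y where "y = z + (e / (2 * norm v)) *\<^sub>R v"
  have nv: "norm v > 0" using assms(1) by simp
  have "dist z y = e / 2" using nv e by (simp add: y_def dist_norm)
  then have "y \<in> T" using e by auto
  then have "v \<bullet> y \<le> 0" using assms(2) by blast
  moreover have "v \<bullet> y = (e / (2 * norm v)) * (v \<bullet> v)" using vz by (simp add: y_def inner_add_right)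
  moreover have "(e / (2 * norm v)) * (v \<bullet> v) > 0" using nv e assms(1) by simp
  ultimately show False by linarith
qed

lemma strict_stat_dim:
  fixes T :: "'a::euclidean_space set" and M :: "'w measure" and Z :: "'w \<Rightarrow> 'a"
  assumes T: "convex T" "closed T" "0 \<in> T" "\<And>x t. x \<in> T \<Longrightarrow> t \<ge> 0 \<Longrightarrow> t *\<^sub>R x \<in> T"
    and v: "v \<noteq> 0" "\<And>d. d \<in> T \<Longrightarrow> v \<bullet> d \<le> 0"
    and Zm: "Z \<in> borel_measurable M"
    and Zi: "integrable M (\<lambda>\<omega>. (norm (Z \<omega>))\<^sup>2)"
    and pos: "measure M {\<omega> \<in> space M. Z \<omega> \<in> interior T} > 0"
  shows "stat_dim M Z (T \<inter> {x. v \<bullet> x = 0}) < stat_dim M Z T"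
proof -
  define K where "K = T \<inter> {x. v \<bullet> x = 0}"
  have K: "convex K" "closed K" "0 \<in> K" "\<And>x t. x \<in> K \<Longrightarrow> t \<ge> 0 \<Longrightarrow> t *\<^sub>R x \<in> K"
    using T unfolding K_def
    by (auto intro!: convex_Int convex_hyperplane closed_Int closed_hyperplane)
  define f where "f \<omega> = (norm (closest_point K (Z \<omega>)))\<^sup>2" for \<omega>
  define g where "g \<omega> = (norm (closest_point T (Z \<omega>)))\<^sup>2" for \<omega>
  have cK: "(\<lambda>\<omega>. closest_point K (Z \<omega>)) \<in> borel_measurable M"
    by (rule measurable_compose[OF Zm borel_measurable_continuous_onI])
       (rule continuous_on_closest_point, use K in auto)
  have cT: "(\<lambda>\<omega>. closest_point T (Z \<omega>)) \<in> borel_measurable M"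
    by (rule measurable_compose[OF Zm borel_measurable_continuous_onI])
       (rule continuous_on_closest_point, use T in auto)
  have fm: "f \<in> borel_measurable M" unfolding f_def using cK by measurable
  have gm: "g \<in> borel_measurable M" unfolding g_def using cT by measurable
  have fle: "f \<omega> \<le> (norm (Z \<omega>))\<^sup>2" for \<omega>
    unfolding f_def using cone_proj_norm[OF K, of "Z \<omega>"] by simp
  have gle: "g \<omega> \<le> (norm (Z \<omega>))\<^sup>2" for \<omega>
    unfolding g_def using cone_proj_norm[OF T, of "Z \<omega>"] by simp
  have fle': "norm (closest_point K (Z \<omega>)) \<le> norm (Z \<omega>)" for \<omega>
    using fle[of \<omega>] unfolding f_def by (rule power2_le_imp_le) simp
  have gle': "norm (closest_point T (Z \<omega>)) \<le> norm (Z \<omega>)" for \<omega>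
    using gle[of \<omega>] unfolding g_def by (rule power2_le_imp_le) simp
  have fi: "integrable M f"
    by (rule Bochner_Integration.integrable_bound[OF Zi fm]) (auto simp: fle' f_def)
  have gi: "integrable M g"
    by (rule Bochner_Integration.integrable_bound[OF Zi gm]) (auto simp: gle' g_def)
  have fg: "f \<omega> \<le> g \<omega>" for \<omega>
    unfolding f_def g_def
    by (intro power_mono cone_proj_mono[OF K T]) (auto simp: K_def)
  define E where "E = {\<omega> \<in> space M. Z \<omega> \<in> interior T}"
  have Es: "E \<in> sets M" using pos measure_notin_sets unfolding E_def by force
  have fgE: "f \<omega> < g \<omega>" if "\<omega> \<in> E" for \<omega>
  proof -
    have zi: "Z \<omega> \<in> interior T" using that E_def by blast
    then have "Z \<omega> \<in> T" using interior_subset by blast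
    then have g: "g \<omega> = (norm (Z \<omega>))\<^sup>2" unfolding g_def by (simp add: closest_point_self)
    have "v \<bullet> Z \<omega> \<noteq> 0" using not_in_face[OF v zi] .
    then have "Z \<omega> \<notin> K" by (simp add: K_def)
    moreover have "closest_point K (Z \<omega>) \<in> K" using K closest_point_in_set by blast
    ultimately have "Z \<omega> - closest_point K (Z \<omega>) \<noteq> 0" by auto
    then have "(norm (Z \<omega> - closest_point K (Z \<omega>)))\<^sup>2 > 0" by simp
    then show ?thesis using cone_proj_norm[OF K, of "Z \<omega>"] g unfolding f_def by linarith
  qed
  show ?thesis
  proof (rule ccontr)
    assume "\<not> ?thesis"
    then have "integral\<^sup>L M g \<le> integral\<^sup>L M f" unfolding stat_dim_def f_def g_def K_def by simp
    then have "integral\<^sup>L M (\<lambda>\<omega>. g \<omega> - f \<omega>) \<le> 0" using Bochner_Integration.integral_diff[OF gi fi] by simp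
    moreover have "integral\<^sup>L M (\<lambda>\<omega>. g \<omega> - f \<omega>) \<ge> 0" using fg by (intro integral_nonneg_AE) auto
    ultimately have "integral\<^sup>L M (\<lambda>\<omega>. g \<omega> - f \<omega>) = 0" by simp
    then have "AE \<omega> in M. g \<omega> - f \<omega> = 0"
      using integral_nonneg_eq_0_iff_AE[of M "\<lambda>\<omega>. g \<omega> - f \<omega>"] fg
      using Bochner_Integration.integrable_diff[OF gi fi] by auto
    then have aeE: "AE \<omega> in M. \<omega> \<notin> E"
      by (rule eventually_mono) (use fgE in force)
    have Eeq: "{x \<in> space M. \<not> x \<notin> E} = E" using E_def by auto
    have "emeasure M E = 0" using iffD1[OF AE_iff_measurable[OF Es Eeq] aeE] .
    then have "measure M E = 0" by (simp add: measure_def)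
    then show False using pos E_def by simp
  qed
qed

theorem lemma3:
  fixes C :: "'a::euclidean_space set" and M :: "'w measure" and Z :: "'w \<Rightarrow> 'a"
    and \<theta>0 :: 'a
  assumes "polyhedron C" and "interior C \<noteq> {}"
    and "prob_space M"
    and "Z \<in> borel_measurable M"
    and "integrable M (\<lambda>\<omega>. (norm (Z \<omega>))\<^sup>2)"
    and "(\<integral>\<omega>. Z \<omega> \<partial>M) = 0"
    and "\<theta>0 \<in> C"
    and "measure M {\<omega> \<in> space M. Z \<omega> \<in> interior (tangent_cone C \<theta>0)} > 0"
  shows "\<exists>c < stat_dim M Z (tangent_cone C \<theta>0).
           \<forall>\<theta>s. \<theta>s \<notin> C \<and> closest_point C \<theta>s = \<theta>0 \<longrightarrow>
             stat_dim M Z (tangent_cone C (closest_point C \<theta>s) \<inter> perp (\<theta>s - closest_point C \<theta>s)) \<le> c"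
proof -
  obtain F where F: "finite F" "C = \<Inter>F" "\<forall>h\<in>F. \<exists>a b. a \<noteq> 0 \<and> h = {x. a \<bullet> x \<le> b}"
    using assms(1) unfolding polyhedron_def by blast
  then obtain a b where ab: "\<And>h. h \<in> F \<Longrightarrow> h = {x. a h \<bullet> x \<le> b h}"
    by metis
  define A where "A = {h\<in>F. a h \<bullet> \<theta>0 = b h}"
  define T where "T = (\<Inter>h\<in>A. {d. a h \<bullet> d \<le> 0})"
  have Teq: "tangent_cone C \<theta>0 = T"
    unfolding T_def A_def by (rule tangent_cone_polyhedron[OF F(1,2) ab assms(7)])
  have finA: "finite A" using F(1) A_def by simp
  have Tp: "convex T" "closed T" "0 \<in> T" "\<And>x t. x \<in> T \<Longrightarrow> t \<ge> 0 \<Longrightarrow> t *\<^sub>R x \<in> T"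
    unfolding T_def
    by (auto intro!: convex_INT closed_INT convex_halfspace_le closed_halfspace_le
             simp: mult_nonneg_nonpos)
  have Tpoly: "polyhedron T"
    unfolding T_def using finA by (intro polyhedron_Inter) (auto intro: polyhedron_halfspace_le)
  have Cc: "convex C" "closed C"
    using assms(1) polyhedron_imp_convex polyhedron_imp_closed by auto
  define S where "S = {T \<inter> {x. v \<bullet> x = 0} | v. v \<noteq> 0 \<and> (\<forall>d\<in>T. v \<bullet> d \<le> 0)}"
  have "S \<subseteq> {G. G face_of T}"
    unfolding S_def using Tp(1) by (auto intro!: face_of_Int_supporting_hyperplane_le)
  then have finS: "finite S" using finite_polyhedron_faces[OF Tpoly] finite_subset by blast
  have lt: "stat_dim M Z K < stat_dim M Z T" if "K \<in> S" for K
    using that unfolding S_def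
    using strict_stat_dim[OF Tp _ _ assms(4,5)] assms(8) Teq by auto
  define c where "c = Max (insert (stat_dim M Z T - 1) (stat_dim M Z ` S))"
  have "c < stat_dim M Z T" unfolding c_def using finS lt by auto
  moreover have "stat_dim M Z (tangent_cone C (closest_point C \<theta>s) \<inter> perp (\<theta>s - closest_point C \<theta>s)) \<le> c"
    if th: "\<theta>s \<notin> C" "closest_point C \<theta>s = \<theta>0" for \<theta>s
  proof -
    define v where "v = \<theta>s - \<theta>0"
    have v0: "v \<noteq> 0" using th assms(7) v_def by auto
    have nc: "v \<bullet> d \<le> 0" if "d \<in> tangent_cone C \<theta>0" for d
    proof -
      have "{\<alpha> *\<^sub>R (x - \<theta>0) | \<alpha> x. \<alpha> \<ge> 0 \<and> x \<in> C} \<subseteq> {d. v \<bullet> d \<le> 0}"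
      proof clarify
        fix \<alpha> :: real and x assume "\<alpha> \<ge> 0" "x \<in> C"
        then have "inner (\<theta>s - closest_point C \<theta>s) (x - closest_point C \<theta>s) \<le> 0"
          using closest_point_dot[OF Cc] by blast
        then have "v \<bullet> (x - \<theta>0) \<le> 0" using th v_def by simp
        then show "v \<bullet> (\<alpha> *\<^sub>R (x - \<theta>0)) \<le> 0" using \<open>\<alpha> \<ge> 0\<close> by (simp add: mult_nonneg_nonpos)
      qed
      then have "tangent_cone C \<theta>0 \<subseteq> {d. v \<bullet> d \<le> 0}"
        unfolding tangent_cone_def by (rule closure_minimal) (rule closed_halfspace_le)
      then show ?thesis using that by blast
    qed
    have "tangent_cone C (closest_point C \<theta>s) \<inter> perp (\<theta>s - closest_point C \<theta>s) = T \<inter> {x. v \<bullet> x = 0}"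
      using th Teq by (auto simp: perp_def v_def inner_commute)
    moreover have "T \<inter> {x. v \<bullet> x = 0} \<in> S" unfolding S_def using v0 nc Teq by blast
    ultimately show ?thesis unfolding c_def using finS by auto
  qed
  ultimately show ?thesis unfolding Teq by blast
qed

end
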